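(* Let $(H,+,\circ)$ be a commutative multiplicative hyperring with identity of characteristic $2$, and let $P$ be a proper strong $\mathcal{C}$-hyperideal of $H$. If $\mathrm{rad}(P)=P$, then $P$ is an sdf-absorbing hyperideal of $H$.
   Context: A commutative multiplicative hyperring $(H,+,\circ)$ consists of an abelian group $(H,+)$ and an associative, commutative hyperoperation $\circ: H\times H\to P^*(H)$ with $x\circ(y+z)\subseteq x\circ y+x\circ z$ and $x\circ(-y)=-(x\circ y)=(-x)\circ y$. For subsets $A,B$, $A\circ B=\bigcup_{a\in A,b\in B}a\circ b$, $A\pm B=\{a\pm b\}$; $x^n=x\circ\cdots\circ x$. Identity: $x\in x\circ 1$ for all $x$. $H$ has characteristic $\alpha$ if $\alpha$ is the least positive integer with $\alpha x=0$ for all $x\in H$. A hyperideal is a nonempty $P$ with $x-y\in P$ and $r\circ x\subseteq P$ for $x,y\in P$, $r\in H$. A proper hyperideal $P$ is prime if $x\circ y\subseteq P$ implies $x\in P$ or $y\in P$; $\mathrm{rad}(P)$ is the intersection of the prime hyperideals containing $P$ ($H$ if none). Let $\mathcal{C}=\{c_1\circ\cdots\circ c_n: c_i\in H,n\in\mathbb{N}\}$ and $\mathfrak{C}=\{\sum_{i=1}^n C_i: C_i\in\mathcal{C}, n\in\mathbb{N}\}$; a hyperideal $P$ is a strong $\mathcal{C}$-hyperideal if for every $D\in\mathfrak{C}$, $D\cap P\neq\varnothing$ implies $D\subseteq P$. A proper hyperideal $P$ is sdf-absorbing if whenever $0\neq x,y\in H$ and $x^2-y^2\subseteq P$, then $x-y\in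 P$ or $x+y\in P$. *)

theory Defs
  imports Main
begin

text \<open>The additive abelian group (H,+) is the ambient type 'a :: ab_group_add (H = UNIV);
  the hyperoperation is m :: 'a => 'a => 'a set.\<close>

definition hmult_set :: "('a \<Rightarrow> 'a \<Rightarrow> 'a set) \<Rightarrow> 'a set \<Rightarrow> 'a set \<Rightarrow> 'a set" where
  "hmult_set m A B = (\<Union>a\<in>A. \<Union>b\<in>B. m a b)"

definition set_plus :: "'a::ab_group_add set \<Rightarrow> 'a set \<Rightarrow> 'a set" where
  "set_plus A B = {a + b | a b. a \<in> A \<and> b \<in> B}"

definition set_minus :: "'a::ab_group_add set \<Rightarrow> 'a set \<Rightarrow> 'a set" where
  "set_minus A B = {a - b | a b. a \<in> A \<and> b \<in> B}"

definition comm_mult_hyperring :: "('a::ab_group_add \<Rightarrow> 'a \<Rightarrow> 'a set) \<Rightarrow> bool" where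
  "comm_mult_hyperring m \<longleftrightarrow>
     (\<forall>x y. m x y \<noteq> {}) \<and>
     (\<forall>x y z. hmult_set m (m x y) {z} = hmult_set m {x} (m y z)) \<and>
     (\<forall>x y. m x y = m y x) \<and>
     (\<forall>x y z. m x (y + z) \<subseteq> set_plus (m x y) (m x z)) \<and>
     (\<forall>x y. m x (- y) = uminus ` (m x y) \<and> uminus ` (m x y) = m (- x) y)"

definition has_identity :: "('a \<Rightarrow> 'a \<Rightarrow> 'a set) \<Rightarrow> bool" where
  "has_identity m \<longleftrightarrow> (\<exists>u. \<forall>x. x \<in> m x u)"

definition nsum_elt :: "nat \<Rightarrow> 'a::ab_group_add \<Rightarrow> 'a" where
  "nsum_elt n x = (((+) x) ^^ n) 0"

definition has_characteristic :: "'a::ab_group_add itself \<Rightarrow> nat \<Rightarrow> bool" where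
  "has_characteristic _ \<alpha> \<longleftrightarrow>
     0 < \<alpha> \<and> (\<forall>x::'a. nsum_elt \<alpha> x = 0) \<and>
     (\<forall>n. 0 < n \<and> n < \<alpha> \<longrightarrow> \<not> (\<forall>x::'a. nsum_elt n x = 0))"

definition hyperideal :: "('a::ab_group_add \<Rightarrow> 'a \<Rightarrow> 'a set) \<Rightarrow> 'a set \<Rightarrow> bool" where
  "hyperideal m P \<longleftrightarrow> P \<noteq> {} \<and> (\<forall>x\<in>P. \<forall>y\<in>P. x - y \<in> P) \<and> (\<forall>r x. x \<in> P \<longrightarrow> m r x \<subseteq> P)"

definition prime_hyperideal :: "('a::ab_group_add \<Rightarrow> 'a \<Rightarrow> 'a set) \<Rightarrow> 'a set \<Rightarrow> bool" where
  "prime_hyperideal m P \<longleftrightarrow> hyperideal m P \<and> P \<noteq> UNIV \<and>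
     (\<forall>x y. m x y \<subseteq> P \<longrightarrow> x \<in> P \<or> y \<in> P)"

text \<open>Intersection of the prime hyperideals containing P (UNIV = H if there are none).\<close>
definition hrad :: "('a::ab_group_add \<Rightarrow> 'a \<Rightarrow> 'a set) \<Rightarrow> 'a set \<Rightarrow> 'a set" where
  "hrad m P = \<Inter> {Q. prime_hyperideal m Q \<and> P \<subseteq> Q}"

inductive_set Cprods :: "('a \<Rightarrow> 'a \<Rightarrow> 'a set) \<Rightarrow> 'a set set" for m where
  single: "{c} \<in> Cprods m"
| step: "A \<in> Cprods m \<Longrightarrow> hmult_set m A {c} \<in> Cprods m"

inductive_set Csums :: "('a::ab_group_add \<Rightarrow> 'a \<Rightarrow> 'a set) \<Rightarrow> 'a set set" for m where
  single: "C \<in> Cprods m \<Longrightarrow> C \<in> Csums m"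
| step: "D \<in> Csums m \<Longrightarrow> C \<in> Cprods m \<Longrightarrow> set_plus D C \<in> Csums m"

definition strong_C_hyperideal :: "('a::ab_group_add \<Rightarrow> 'a \<Rightarrow> 'a set) \<Rightarrow> 'a set \<Rightarrow> bool" where
  "strong_C_hyperideal m P \<longleftrightarrow> hyperideal m P \<and>
     (\<forall>D\<in>Csums m. D \<inter> P \<noteq> {} \<longrightarrow> D \<subseteq> P)"

definition sdf_absorbing :: "('a::ab_group_add \<Rightarrow> 'a \<Rightarrow> 'a set) \<Rightarrow> 'a set \<Rightarrow> bool" where
  "sdf_absorbing m P \<longleftrightarrow> hyperideal m P \<and> P \<noteq> UNIV \<and>
     (\<forall>x y. x \<noteq> 0 \<longrightarrow> y \<noteq> 0 \<longrightarrow> set_minus (m x x) (m y y) \<subseteq> P \<longrightarrow>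
        x - y \<in> P \<or> x + y \<in> P)"

end

theory Submission
  imports Defs
begin

theorem mainTheorem2:
  fixes m :: "'a::ab_group_add \<Rightarrow> 'a \<Rightarrow> 'a set" and P :: "'a set"
  assumes "comm_mult_hyperring m"
    and "has_identity m"
    and "has_characteristic TYPE('a) 2"
    and "strong_C_hyperideal m P"
    and "P \<noteq> UNIV"
    and "hrad m P = P"
  shows "sdf_absorbing m P"
proof -
  have two: "\<And>x::'a. x + x = 0"
  proof -
    fix x :: 'a
    have "nsum_elt 2 x = 0" using assms(3) unfolding has_characteristic_def by blast
    thus "x + x = 0" by (simp add: nsum_elt_def numeral_2_eq_2)
  qed
  have neg: "\<And>x::'a. - x = x" using two by (metis add_eq_0_iff)
  note H = assms(1)[unfolded comm_mult_hyperring_def]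
  have comm: "\<And>x y. m x y = m y x" using H by simp
  have distr: "\<And>x y z. m x (y + z) \<subseteq> set_plus (m x y) (m x z)" using H by simp
  have ne: "\<And>x y. m x y \<noteq> {}" using H by simp
  note S = assms(4)[unfolded strong_C_hyperideal_def]
  have hi: "hyperideal m P" using S by simp
  have strong: "\<And>D. D \<in> Csums m \<Longrightarrow> D \<inter> P \<noteq> {} \<Longrightarrow> D \<subseteq> P"
    using S by simp
  have cp: "\<And>x y. m x y \<in> Cprods m"
  proof -
    fix x y
    have "hmult_set m {x} {y} \<in> Cprods m" by (rule Cprods.step[OF Cprods.single])
    thus "m x y \<in> Cprods m" by (simp add: hmult_set_def)
  qed
  have key: "x + y \<in> P" if H: "set_minus (m x x) (m y y) \<subseteq> P" for x y
  proof -
    define D where "D = set_plus (set_plus (set_plus (m x x) (m x y)) (m y x)) (m y y)"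
    have DC: "D \<in> Csums m" unfolding D_def
      by (intro Csums.step Csums.single cp)
    obtain a where a: "a \<in> m x x" using ne by blast
    obtain d where d: "d \<in> m y y" using ne by blast
    obtain b where b: "b \<in> m x y" using ne by blast
    have bc: "b \<in> m y x" using b comm by blast
    have "a - d \<in> P" using H a d unfolding set_minus_def by blast
    hence adP: "a + d \<in> P" using neg by (metis diff_conv_add_uminus)
    have e1: "a + b + b + d = a + d" using two by (simp add: add.assoc)
    have e2: "a + b + b + d \<in> D" unfolding D_def set_plus_def using a b bc d by blast
    have "a + d \<in> D \<inter> P" using adP e2 unfolding e1 by simp
    hence "D \<inter> P \<noteq> {}" by blast
    hence DP: "D \<subseteq> P" using strong DC by blast
    have sq: "m (x + y) (x + y) \<subseteq> P"
    proof
      fix z assume z: "z \<in> m (x + y) (x + y)"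
      then obtain u v where uv: "z = u + v" "u \<in> m (x + y) x" "v \<in> m (x + y) y"
        using distr[of "x + y" x y] unfolding set_plus_def by blast
      from uv(2) have "u \<in> m x (x + y)" using comm by blast
      then obtain a' b' where 1: "u = a' + b'" "a' \<in> m x x" "b' \<in> m x y"
        using distr[of x x y] unfolding set_plus_def by blast
      from uv(3) have "v \<in> m y (x + y)" using comm by blast
      then obtain c' d' where 2: "v = c' + d'" "c' \<in> m y x" "d' \<in> m y y"
        using distr[of y x y] unfolding set_plus_def by blast
      have "z = a' + b' + c' + d'" using uv 1 2 by (simp add: add.assoc)
      hence "z \<in> D" unfolding D_def set_plus_def using 1 2 by blast
      thus "z \<in> P" using DP by blast
    qed
    have "x + y \<in> Q" if "prime_hyperideal m Q" "P \<subseteq> Q" for Q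
      using that sq unfolding prime_hyperideal_def by blast
    hence "x + y \<in> hrad m P" unfolding hrad_def by blast
    thus ?thesis using assms(6) by simp
  qed
  show ?thesis unfolding sdf_absorbing_def
  proof (intro conjI hi assms(5) allI impI)
    fix x y :: 'a
    assume "set_minus (m x x) (m y y) \<subseteq> P"
    hence "x + y \<in> P" by (rule key)
    hence "x - y \<in> P" using neg by (metis diff_conv_add_uminus)
    thus "x - y \<in> P \<or> x + y \<in> P" by blast
  qed
qed

end
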